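(* Let $(\mathcal{H},\langle\cdot,\cdot\rangle)$ be a real Hilbert space with induced norm $\|\cdot\|$. Let $f:\mathcal{H}\to\mathbb{R}$ be $\mu$-strongly convex and $L$-smooth with $0<\mu<L<+\infty$, and let $g:\mathcal{H}\to\mathbb{R}\cup\{+\infty\}$ be convex, proper and lower semicontinuous. Let $q=\mu/L$ and let $((x^k,y^k,z^k))_{k\in\mathbb{N}_0}$ be generated by the Prox-TMM method (described in the context) from an arbitrary $x^0\in\mathcal{H}$, and let $x^\star$ be the unique minimizer of $f+g$. Then $\|z^k-x^\star\|\in\mathcal{O}\big((1-\sqrt q)^k\big)$ as $k\to\infty$.
   Context: $f$ is $L$-smooth if Fréchet differentiable with $L$-Lipschitz gradient; $\mu$-strongly convex means $f-\frac{\mu}{2}\|\cdot\|^2$ is convex. For $\gamma>0$, $\operatorname{Prox}^{\gamma}_g(x)=\operatorname{argmin}_z\big(g(z)+\frac{1}{2\gamma}\|x-z\|^2\big)$. The Prox-TMM method: $q=\mu/L$, $z^0=x^0$, and for $k=0,1,2,\dots$: $y^k=\frac{2\sqrt q}{1+\sqrt q}z^k+\frac{1-\sqrt q}{1+\sqrt q}x^k$, $\bar z^{k+1}=(1-\sqrt q)z^k+\sqrt q\,y^k-\frac{1}{\sqrt q L}\nabla f(y^k)$, $z^{k+1}=\operatorname{Prox}^{1/(\sqrt q L)}_g(\bar z^{k+1})$, $x^{k+1}=y^k-\frac1L\nabla f(y^k)-\sqrt q(\bar z^{k+1}-z^{k+1})$. *)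

theory Defs
  imports "HOL-Analysis.Analysis" "HOL-Library.Landau_Symbols"
begin

definition ext_convex :: "('a::real_vector \<Rightarrow> ereal) \<Rightarrow> bool" where
  "ext_convex g \<longleftrightarrow> (\<forall>x y t. 0 \<le> t \<and> t \<le> 1 \<longrightarrow>
      g ((1 - t) *\<^sub>R x + t *\<^sub>R y) \<le> ereal (1 - t) * g x + ereal t * g y)"

definition ext_proper :: "('a \<Rightarrow> ereal) \<Rightarrow> bool" where
  "ext_proper g \<longleftrightarrow> (\<forall>x. g x \<noteq> -\<infinity>) \<and> (\<exists>x. g x \<noteq> \<infinity>)"

text \<open>Lower semicontinuity (sequential, equivalent to the topological one in metric spaces).\<close>
definition ext_lsc :: "('a::metric_space \<Rightarrow> ereal) \<Rightarrow> bool" where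
  "ext_lsc g \<longleftrightarrow> (\<forall>x X. X \<longlonglongrightarrow> x \<longrightarrow> g x \<le> liminf (\<lambda>n. g (X n)))"

definition prox :: "real \<Rightarrow> ('a::real_normed_vector \<Rightarrow> ereal) \<Rightarrow> 'a \<Rightarrow> 'a" where
  "prox \<gamma> g x = (SOME z. \<forall>w. g z + ereal (1 / (2 * \<gamma>) * (norm (x - z))\<^sup>2)
                                \<le> g w + ereal (1 / (2 * \<gamma>) * (norm (x - w))\<^sup>2))"

end

theory Submission
  imports Defs
begin


locale six = fixes v1 v2 v3 v4 v5 v6 :: "'a::real_inner"
begin
definition lc :: "real \<Rightarrow> real \<Rightarrow> real \<Rightarrow> real \<Rightarrow> real \<Rightarrow> real \<Rightarrow> 'a" where
  "lc a1 a2 a3 a4 a5 a6 = a1 *\<^sub>R v1 + a2 *\<^sub>R v2 + a3 *\<^sub>R v3 + a4 *\<^sub>R v4 + a5 *\<^sub>R v5 + a6 *\<^sub>R v6"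
lemma lc_add: "lc a1 a2 a3 a4 a5 a6 + lc b1 b2 b3 b4 b5 b6 = lc (a1+b1) (a2+b2) (a3+b3) (a4+b4) (a5+b5) (a6+b6)"
  by (simp add: lc_def algebra_simps)
lemma lc_diff: "lc a1 a2 a3 a4 a5 a6 - lc b1 b2 b3 b4 b5 b6 = lc (a1-b1) (a2-b2) (a3-b3) (a4-b4) (a5-b5) (a6-b6)"
  by (simp add: lc_def algebra_simps)
lemma lc_scale: "c *\<^sub>R lc a1 a2 a3 a4 a5 a6 = lc (c*a1) (c*a2) (c*a3) (c*a4) (c*a5) (c*a6)"
  by (simp add: lc_def algebra_simps)
definition GF :: "real \<Rightarrow> real \<Rightarrow> real \<Rightarrow> real \<Rightarrow> real \<Rightarrow> real \<Rightarrow> real \<Rightarrow> real \<Rightarrow> real \<Rightarrow> real \<Rightarrow> real \<Rightarrow> real \<Rightarrow> real \<Rightarrow> real \<Rightarrow> real \<Rightarrow> real \<Rightarrow> real \<Rightarrow> real \<Rightarrow> real \<Rightarrow> real \<Rightarrow> real \<Rightarrow> real" where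
  "GF c0 c1 c2 c3 c4 c5 c6 c7 c8 c9 c10 c11 c12 c13 c14 c15 c16 c17 c18 c19 c20 = c0 * inner v1 v1 + c1 * inner v2 v2 + c2 * inner v3 v3 + c3 * inner v4 v4 + c4 * inner v5 v5 + c5 * inner v6 v6 + c6 * inner v1 v2 + c7 * inner v1 v3 + c8 * inner v1 v4 + c9 * inner v1 v5 + c10 * inner v1 v6 + c11 * inner v2 v3 + c12 * inner v2 v4 + c13 * inner v2 v5 + c14 * inner v2 v6 + c15 * inner v3 v4 + c16 * inner v3 v5 + c17 * inner v3 v6 + c18 * inner v4 v5 + c19 * inner v4 v6 + c20 * inner v5 v6"
lemma GF_add: "GF c0 c1 c2 c3 c4 c5 c6 c7 c8 c9 c10 c11 c12 c13 c14 c15 c16 c17 c18 c19 c20 + GF d0 d1 d2 d3 d4 d5 d6 d7 d8 d9 d10 d11 d12 d13 d14 d15 d16 d17 d18 d19 d20 = GF (c0+d0) (c1+d1) (c2+d2) (c3+d3) (c4+d4) (c5+d5) (c6+d6) (c7+d7) (c8+d8) (c9+d9) (c10+d10) (c11+d11) (c12+d12) (c13+d13) (c14+d14) (c15+d15) (c16+d16) (c17+d17) (c18+d18) (c19+d19) (c20+d20)"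
  by (simp add: GF_def algebra_simps)
lemma GF_diff: "GF c0 c1 c2 c3 c4 c5 c6 c7 c8 c9 c10 c11 c12 c13 c14 c15 c16 c17 c18 c19 c20 - GF d0 d1 d2 d3 d4 d5 d6 d7 d8 d9 d10 d11 d12 d13 d14 d15 d16 d17 d18 d19 d20 = GF (c0-d0) (c1-d1) (c2-d2) (c3-d3) (c4-d4) (c5-d5) (c6-d6) (c7-d7) (c8-d8) (c9-d9) (c10-d10) (c11-d11) (c12-d12) (c13-d13) (c14-d14) (c15-d15) (c16-d16) (c17-d17) (c18-d18) (c19-d19) (c20-d20)"
  by (simp add: GF_def algebra_simps)
lemma GF_scale: "x * GF c0 c1 c2 c3 c4 c5 c6 c7 c8 c9 c10 c11 c12 c13 c14 c15 c16 c17 c18 c19 c20 = GF (x*c0) (x*c1) (x*c2) (x*c3) (x*c4) (x*c5) (x*c6) (x*c7) (x*c8) (x*c9) (x*c10) (x*c11) (x*c12) (x*c13) (x*c14) (x*c15) (x*c16) (x*c17) (x*c18) (x*c19) (x*c20)"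
  by (simp add: GF_def algebra_simps)
lemma GF_uminus: "- GF c0 c1 c2 c3 c4 c5 c6 c7 c8 c9 c10 c11 c12 c13 c14 c15 c16 c17 c18 c19 c20 = GF (-c0) (-c1) (-c2) (-c3) (-c4) (-c5) (-c6) (-c7) (-c8) (-c9) (-c10) (-c11) (-c12) (-c13) (-c14) (-c15) (-c16) (-c17) (-c18) (-c19) (-c20)"
  by (simp add: GF_def algebra_simps)
lemma GF_cong: "c0 = d0 \<Longrightarrow> c1 = d1 \<Longrightarrow> c2 = d2 \<Longrightarrow> c3 = d3 \<Longrightarrow> c4 = d4 \<Longrightarrow> c5 = d5 \<Longrightarrow> c6 = d6 \<Longrightarrow> c7 = d7 \<Longrightarrow> c8 = d8 \<Longrightarrow> c9 = d9 \<Longrightarrow> c10 = d10 \<Longrightarrow> c11 = d11 \<Longrightarrow> c12 = d12 \<Longrightarrow> c13 = d13 \<Longrightarrow> c14 = d14 \<Longrightarrow> c15 = d15 \<Longrightarrow> c16 = d16 \<Longrightarrow> c17 = d17 \<Longrightarrow> c18 = d18 \<Longrightarrow> c19 = d19 \<Longrightarrow> c20 = d20 \<Longrightarrow> GF c0 c1 c2 c3 c4 c5 c6 c7 c8 c9 c10 c11 c12 c13 c14 c15 c16 c17 c18 c19 c20 = GF d0 d1 d2 d3 d4 d5 d6 d7 d8 d9 d10 d11 d12 d13 d14 d15 d16 d17 d18 d19 d20"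
  by simp
lemma lc_inner: "inner (lc a1 a2 a3 a4 a5 a6) (lc b1 b2 b3 b4 b5 b6) = GF (a1*b1) (a2*b2) (a3*b3) (a4*b4) (a5*b5) (a6*b6) (a1*b2+a2*b1) (a1*b3+a3*b1) (a1*b4+a4*b1) (a1*b5+a5*b1) (a1*b6+a6*b1) (a2*b3+a3*b2) (a2*b4+a4*b2) (a2*b5+a5*b2) (a2*b6+a6*b2) (a3*b4+a4*b3) (a3*b5+a5*b3) (a3*b6+a6*b3) (a4*b5+a5*b4) (a4*b6+a6*b4) (a5*b6+a6*b5)"
  by (simp add: GF_def lc_def inner_add_left inner_add_right inner_commute algebra_simps)
lemma lc_norm: "(norm (lc a1 a2 a3 a4 a5 a6))^2 = GF (a1*a1) (a2*a2) (a3*a3) (a4*a4) (a5*a5) (a6*a6) (a1*a2+a2*a1) (a1*a3+a3*a1) (a1*a4+a4*a1) (a1*a5+a5*a1) (a1*a6+a6*a1) (a2*a3+a3*a2) (a2*a4+a4*a2) (a2*a5+a5*a2) (a2*a6+a6*a2) (a3*a4+a4*a3) (a3*a5+a5*a3) (a3*a6+a6*a3) (a4*a5+a5*a4) (a4*a6+a6*a4) (a5*a6+a6*a5)"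
  by (simp add: power2_norm_eq_inner lc_inner)
lemma key_lc:
  fixes s L P M :: real
  assumes hP: "P = 1 + s" and hM: "M = 1 - s" and nz: "P \<noteq> 0" "M \<noteq> 0" "s \<noteq> 0" "L \<noteq> 0"
  shows "let Z = lc 1 0 0 0 0 0; Yp = lc 0 1 0 0 0 0; Dp = lc 0 0 1 0 0 0; U = lc 0 0 0 1 0 0; D = lc 0 0 0 0 1 0; Up = lc 0 0 0 0 0 1;
     mu = s^2 * L; X = Yp - (1/L) *\<^sub>R (Dp + U);
     Yv = (2 * s / P) *\<^sub>R Z + (M / P) *\<^sub>R X;
     Zp = M *\<^sub>R Z + s *\<^sub>R Yv - (1/(s * L)) *\<^sub>R (D + Up);
     a = s^2 * L / (M * P); aL = s^2 / (M * P); c2 = 1 / (2 * L * M * P) in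
     (a * (norm Zp)^2 + aL * inner Zp Up + c2 * (norm Up)^2 - (mu/2 * (norm Yv)^2 + c2 * (norm (D - mu *\<^sub>R Yv))^2))
     - M^2 * (a * (norm Z)^2 + aL * inner Z U + c2 * (norm U)^2 - (mu/2 * (norm Yp)^2 + c2 * (norm (Dp - mu *\<^sub>R Yp))^2))
     + (1 - M^2) * (inner D Yv - (mu/2 * (norm Yv)^2 + c2 * (norm (D - mu *\<^sub>R Yv))^2))
     + M^2 * (- inner D (Yp - Yv) - (mu/2 * (norm (Yp - Yv))^2 + c2 * (norm ((Dp - D) - mu *\<^sub>R (Yp - Yv)))^2))
     + s * (1 + M) / (M * P) * inner Up Zp - s * M / P * inner U (Zp - Z)
   = -(M / (2 * P * L)) * (norm (U - Up))^2 - (c2 - M / (2 * P * L)) * (norm Up)^2"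
  unfolding Let_def
  apply (simp only: lc_add lc_diff lc_scale lc_norm lc_inner GF_add GF_diff GF_scale GF_uminus)
  apply (rule GF_cong)
  apply (simp_all add: nz field_simps)
  apply (simp_all add: hP hM)
  apply (algebra)+
  done
end

lemma key_vec:
  fixes Z Yp Dp U D Up Xv Yv Zp :: "'a::real_inner" and s L P M :: real
  assumes hP: "P = 1 + s" and hM: "M = 1 - s" and nz: "P \<noteq> 0" "M \<noteq> 0" "s \<noteq> 0" "L \<noteq> 0"
    and X: "Xv = Yp - (1/L) *\<^sub>R (Dp + U)" and Y: "Yv = (2 * s / P) *\<^sub>R Z + (M / P) *\<^sub>R Xv"
    and Zd: "Zp = M *\<^sub>R Z + s *\<^sub>R Yv - (1/(s * L)) *\<^sub>R (D + Up)"
  shows "(s^2 * L / (M * P) * (norm Zp)^2 + s^2 / (M * P) * inner Zp Up + 1 / (2 * L * M * P) * (norm Up)^2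
          - (s^2 * L / 2 * (norm Yv)^2 + 1 / (2 * L * M * P) * (norm (D - (s^2 * L) *\<^sub>R Yv))^2))
     - M^2 * (s^2 * L / (M * P) * (norm Z)^2 + s^2 / (M * P) * inner Z U + 1 / (2 * L * M * P) * (norm U)^2
          - (s^2 * L / 2 * (norm Yp)^2 + 1 / (2 * L * M * P) * (norm (Dp - (s^2 * L) *\<^sub>R Yp))^2))
     + (1 - M^2) * (inner D Yv - (s^2 * L / 2 * (norm Yv)^2 + 1 / (2 * L * M * P) * (norm (D - (s^2 * L) *\<^sub>R Yv))^2))
     + M^2 * (- inner D (Yp - Yv) - (s^2 * L / 2 * (norm (Yp - Yv))^2
          + 1 / (2 * L * M * P) * (norm ((Dp - D) - (s^2 * L) *\<^sub>R (Yp - Yv)))^2))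
     + s * (1 + M) / (M * P) * inner Up Zp - s * M / P * inner U (Zp - Z)
   = -(M / (2 * P * L)) * (norm (U - Up))^2 - (1 / (2 * L * M * P) - M / (2 * P * L)) * (norm Up)^2"
proof -
  have lcs: "six.lc Z Yp Dp U D Up 1 0 0 0 0 0 = Z" "six.lc Z Yp Dp U D Up 0 1 0 0 0 0 = Yp"
    "six.lc Z Yp Dp U D Up 0 0 1 0 0 0 = Dp" "six.lc Z Yp Dp U D Up 0 0 0 1 0 0 = U"
    "six.lc Z Yp Dp U D Up 0 0 0 0 1 0 = D" "six.lc Z Yp Dp U D Up 0 0 0 0 0 1 = Up"
    by (simp_all add: six.lc_def)
  show ?thesis using six.key_lc[of P s M L Z Yp Dp U D Up, OF hP hM nz] unfolding Let_def lcs Zd Y X .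
qed

lemma combine:
  fixes T1 T0 A1 A2 Ga Gb R F0 F1 M :: real
  assumes e: "T1 - M^2 * T0 + (1 - M^2) * A1 + M^2 * A2 + Ga - Gb = R"
    and i1: "0 \<le> -F1 + A1" and i2: "0 \<le> F0 - F1 + A2" and g: "Gb \<le> Ga" and r: "R \<le> 0"
    and m: "0 \<le> 1 - M^2"
  shows "T1 + F1 \<le> M^2 * (T0 + F0)"
proof -
  have p1: "0 \<le> (1 - M^2) * (-F1 + A1)" using m i1 by simp
  have p2: "0 \<le> M^2 * (F0 - F1 + A2)" using i2 by simp
  have eq: "T1 + F1 - M^2 * (T0 + F0) = R - (Ga - Gb) - (1 - M^2) * (-F1 + A1) - M^2 * (F0 - F1 + A2)"
    unfolding e[symmetric] by (simp add: algebra_simps)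
  show ?thesis using p1 p2 eq g r by linarith
qed



lemma small_t_le:
  fixes A B C :: real
  assumes h: "\<And>t. 0 < t \<Longrightarrow> t \<le> 1 \<Longrightarrow> B - t * C \<le> A"
  shows "B \<le> A"
proof (rule ccontr)
  assume "\<not> B \<le> A"
  hence AB: "A < B" by simp
  show False
  proof (cases "C \<le> 0")
    case True
    have "B - 1 * C \<le> A" using h[of 1] by simp
    thus False using True AB by simp
  next
    case False
    define t where "t = min 1 ((B - A) / (2 * C))"
    have t0: "0 < t" using False AB unfolding t_def by auto
    have t1: "t \<le> 1" unfolding t_def by auto
    have "t * C \<le> (B - A) / (2 * C) * C"
      using False unfolding t_def by (intro mult_right_mono) auto
    also have "\<dots> = (B - A) / 2" using False by (simp add: field_simps)
    finally have "B - t * C > A" using AB by simp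
    thus False using h[OF t0 t1] by simp
  qed
qed

locale smooth =
  fixes f :: "'a::real_inner \<Rightarrow> real" and gradf :: "'a \<Rightarrow> 'a" and L :: real
  assumes f_deriv: "\<And>u. (f has_derivative (\<lambda>h. gradf u \<bullet> h)) (at u)"
    and f_lip: "\<And>u v. norm (gradf u - gradf v) \<le> L * norm (u - v)"
begin

lemma line_deriv:
  "((\<lambda>t. f (b + t *\<^sub>R w)) has_real_derivative (gradf (b + t *\<^sub>R w) \<bullet> w)) (at t)"
proof -
  have d1: "((\<lambda>t. b + t *\<^sub>R w) has_derivative (\<lambda>h. h *\<^sub>R w)) (at t)"
    by (auto intro!: derivative_eq_intros)
  have "((\<lambda>t. f (b + t *\<^sub>R w)) has_derivative (\<lambda>h. gradf (b + t *\<^sub>R w) \<bullet> (h *\<^sub>R w))) (at t)"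
    using has_derivative_compose[OF d1 f_deriv] .
  moreover have "(\<lambda>h. gradf (b + t *\<^sub>R w) \<bullet> (h *\<^sub>R w)) = (*) (gradf (b + t *\<^sub>R w) \<bullet> w)"
    by (auto simp: mult.commute)
  ultimately show ?thesis by (simp add: has_field_derivative_def)
qed

lemma descent_both:
  "\<bar>f a - f b - gradf b \<bullet> (a - b)\<bar> \<le> L / 2 * (norm (a - b))^2"
proof -
  define w where "w = a - b"
  define N where "N = (norm w)^2"
  have bnd: "\<bar>gradf (b + t *\<^sub>R w) \<bullet> w - gradf b \<bullet> w\<bar> \<le> L * t * N" if "0 \<le> t" for t
  proof -
    have "\<bar>gradf (b + t *\<^sub>R w) \<bullet> w - gradf b \<bullet> w\<bar> = \<bar>(gradf (b + t *\<^sub>R w) - gradf b) \<bullet> w\<bar>"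
      by (simp add: inner_diff_left)
    also have "\<dots> \<le> norm (gradf (b + t *\<^sub>R w) - gradf b) * norm w"
      by (rule Cauchy_Schwarz_ineq2)
    also have "\<dots> \<le> (L * norm (t *\<^sub>R w)) * norm w"
      using f_lip[of "b + t *\<^sub>R w" b] by (intro mult_right_mono) auto
    also have "\<dots> = L * t * N" using that by (simp add: N_def power2_eq_square)
    finally show ?thesis .
  qed
  define p1 where "p1 = (\<lambda>t. f (b + t *\<^sub>R w) - t * (gradf b \<bullet> w) - L / 2 * t^2 * N)"
  define p2 where "p2 = (\<lambda>t. f (b + t *\<^sub>R w) - t * (gradf b \<bullet> w) + L / 2 * t^2 * N)"
  have dp1: "(p1 has_real_derivative (gradf (b + t *\<^sub>R w) \<bullet> w - gradf b \<bullet> w - L * t * N)) (at t)" for t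
    unfolding p1_def by (auto intro!: derivative_eq_intros line_deriv)
  have dp2: "(p2 has_real_derivative (gradf (b + t *\<^sub>R w) \<bullet> w - gradf b \<bullet> w + L * t * N)) (at t)" for t
    unfolding p2_def by (auto intro!: derivative_eq_intros line_deriv)
  have "p1 1 \<le> p1 0"
    by (rule DERIV_nonpos_imp_nonincreasing[of 0 1 p1], simp)
       (use dp1 bnd in \<open>fastforce simp: abs_le_iff\<close>)
  moreover have "p2 0 \<le> p2 1"
    by (rule DERIV_nonneg_imp_nondecreasing[of 0 1 p2], simp)
       (use dp2 bnd in \<open>fastforce simp: abs_le_iff\<close>)
  ultimately have "f a - f b - gradf b \<bullet> (a - b) \<le> L / 2 * (norm (a - b))^2"
    "-(L / 2 * (norm (a - b))^2) \<le> f a - f b - gradf b \<bullet> (a - b)"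
    unfolding p1_def p2_def w_def N_def by (simp_all add: algebra_simps)
  thus ?thesis unfolding abs_le_iff by linarith
qed

lemma descent_upper: "f a \<le> f b + gradf b \<bullet> (a - b) + L / 2 * (norm (a - b))^2"
  using descent_both[of a b] unfolding abs_le_iff by linarith
lemma descent_lower: "f b + gradf b \<bullet> (a - b) - L / 2 * (norm (a - b))^2 \<le> f a"
  using descent_both[of a b] unfolding abs_le_iff by linarith


lemma sc_tangent:
  assumes conv: "convex_on UNIV (\<lambda>u. f u - mu / 2 * (norm u)\<^sup>2)"
  shows "f b + gradf b \<bullet> (a - b) + mu / 2 * (norm (a - b))^2 \<le> f a"
proof -
  define w where "w = a - b"
  define h where "h = (\<lambda>u. f u - mu / 2 * (norm u)\<^sup>2)"
  have key: "(gradf b - mu *\<^sub>R b) \<bullet> w - t * ((L + mu) / 2 * (norm w)^2) \<le> h a - h b"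
    if t0: "0 < t" and t1: "t \<le> 1" for t
  proof -
    have "h ((1 - t) *\<^sub>R b + t *\<^sub>R a) \<le> (1 - t) * h b + t * h a"
      using convex_onD[OF conv, of t b a] t0 t1 unfolding h_def by auto
    moreover have eqv: "(1 - t) *\<^sub>R b + t *\<^sub>R a = b + t *\<^sub>R w"
      unfolding w_def by (simp add: algebra_simps)
    ultimately have c1: "h (b + t *\<^sub>R w) \<le> (1 - t) * h b + t * h a" by simp
    have c2: "f b + gradf b \<bullet> (t *\<^sub>R w) - L / 2 * (norm (t *\<^sub>R w))^2 \<le> f (b + t *\<^sub>R w)"
      using descent_lower[of b "b + t *\<^sub>R w"] by simp
    have n1: "(norm (b + t *\<^sub>R w))^2 = (norm b)^2 + 2 * t * (b \<bullet> w) + t^2 * (norm w)^2"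
      unfolding power2_norm_eq_inner by (simp add: inner_add_left inner_add_right inner_commute algebra_simps power2_eq_square)
    have n2: "(norm (t *\<^sub>R w))^2 = t^2 * (norm w)^2" using t0 by (simp add: power_mult_distrib)
    have c1': "h (b + t *\<^sub>R w) - h b \<le> t * (h a - h b)" using c1 by (simp add: algebra_simps)
    have e1: "h (b + t *\<^sub>R w) - h b = (f (b + t *\<^sub>R w) - f b) - mu / 2 * (2 * t * (b \<bullet> w) + t^2 * (norm w)^2)"
      unfolding h_def n1 by (simp add: algebra_simps)
    have c2': "t * (gradf b \<bullet> w) - L / 2 * (t^2 * (norm w)^2) \<le> f (b + t *\<^sub>R w) - f b"
      using c2 n2 by simp
    have e2: "t * ((gradf b - mu *\<^sub>R b) \<bullet> w - t * ((L + mu) / 2 * (norm w)^2))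
       = (t * (gradf b \<bullet> w) - L / 2 * (t^2 * (norm w)^2)) - mu / 2 * (2 * t * (b \<bullet> w) + t^2 * (norm w)^2)"
      by (simp add: inner_diff_left algebra_simps power2_eq_square)
    have "t * ((gradf b - mu *\<^sub>R b) \<bullet> w - t * ((L + mu) / 2 * (norm w)^2)) \<le> t * (h a - h b)"
      using c1' e1 c2' e2 by linarith
    thus ?thesis using t0 by simp
  qed
  have "(gradf b - mu *\<^sub>R b) \<bullet> w \<le> h a - h b"
    by (rule small_t_le[of _ "(L + mu) / 2 * (norm w)^2"]) (use key in auto)
  moreover have "(norm a)^2 = (norm b)^2 + 2 * (b \<bullet> w) + (norm w)^2"
    unfolding w_def by (simp add: power2_norm_eq_inner inner_diff_left inner_diff_right inner_commute algebra_simps)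
  ultimately show ?thesis unfolding h_def w_def by (simp add: inner_diff_left algebra_simps)
qed

lemma interp:
  assumes conv: "convex_on UNIV (\<lambda>u. f u - mu / 2 * (norm u)\<^sup>2)" and mL: "mu < L"
  shows "f b + gradf b \<bullet> (a - b) + mu / 2 * (norm (a - b))^2
           + (norm (gradf a - gradf b - mu *\<^sub>R (a - b)))^2 / (2 * (L - mu)) \<le> f a"
proof -
  define l where "l = L - mu"
  have l0: "0 < l" using mL unfolding l_def by simp
  define Dl where "Dl = gradf a - gradf b - mu *\<^sub>R (a - b)"
  define e where "e = - ((1 / l) *\<^sub>R Dl)"
  define w' where "w' = a + e"
  have T: "f b + gradf b \<bullet> (w' - b) + mu / 2 * (norm (w' - b))^2 \<le> f w'"
    by (rule sc_tangent[OF conv])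
  have U: "f w' \<le> f a + gradf a \<bullet> (w' - a) + L / 2 * (norm (w' - a))^2"
    by (rule descent_upper)
  have i1: "w' - b = (a - b) + e" "w' - a = e" unfolding w'_def by auto
  have i2: "(norm ((a - b) + e))^2 = (norm (a - b))^2 + 2 * ((a - b) \<bullet> e) + (norm e)^2"
    by (simp add: power2_norm_eq_inner inner_add_left inner_add_right inner_commute algebra_simps)
  have ga: "gradf a = gradf b + Dl + mu *\<^sub>R (a - b)" unfolding Dl_def by simp
  have E1: "gradf b \<bullet> (w' - b) + mu / 2 * (norm (w' - b))^2 - gradf a \<bullet> (w' - a) - L / 2 * (norm (w' - a))^2
        = gradf b \<bullet> (a - b) + mu / 2 * (norm (a - b))^2 - Dl \<bullet> e - l / 2 * (norm e)^2"
    unfolding i1 i2 ga l_def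
    apply (simp add: inner_add_left inner_add_right algebra_simps)
    apply (simp add: field_simps)
    done
  have E2: "-(Dl \<bullet> e) - l / 2 * (norm e)^2 = (norm Dl)^2 / (2 * l)"
  proof -
    have "Dl \<bullet> e = -((norm Dl)^2 / l)" unfolding e_def by (simp add: power2_norm_eq_inner)
    moreover have "(norm e)^2 = (norm Dl)^2 / l^2" unfolding e_def using l0
      by (simp add: power_divide power_mult_distrib divide_simps)
    ultimately show ?thesis using l0 by (simp add: field_simps power2_eq_square)
  qed
  show ?thesis using T U E1 E2 unfolding Dl_def[symmetric] l_def[symmetric] by linarith
qed

end



lemma ereal_fin: fixes e :: ereal assumes "e \<noteq> \<infinity>" "e \<noteq> -\<infinity>" shows "e = ereal (real_of_ereal e)"
  using assms by (cases e) auto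

lemma conv_real:
  fixes g :: "'a::real_vector \<Rightarrow> ereal"
  assumes "ext_convex g" "g x = ereal a" "g y = ereal b" "0 \<le> t" "t \<le> 1"
  shows "g ((1 - t) *\<^sub>R x + t *\<^sub>R y) \<le> ereal ((1 - t) * a + t * b)"
proof -
  have "g ((1 - t) *\<^sub>R x + t *\<^sub>R y) \<le> ereal (1 - t) * g x + ereal t * g y"
    using assms(1,4,5) unfolding ext_convex_def by blast
  also have "\<dots> = ereal ((1 - t) * a + t * b)" using assms(2,3) by simp
  finally show ?thesis .
qed

lemma subgrad_core:
  fixes g :: "'a::real_inner \<Rightarrow> ereal"
  assumes conv: "ext_convex g" and gpr: "\<forall>x. g x \<noteq> -\<infinity>"
    and gz: "g z = ereal Gz"
    and minp: "\<And>t Gv. 0 < t \<Longrightarrow> t \<le> 1 \<Longrightarrow> g (z + t *\<^sub>R (w - z)) = ereal Gv \<Longrightarrow>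
                 Gz \<le> Gv + t * (p \<bullet> (w - z)) + t^2 * K"
  shows "g z + ereal (- (p \<bullet> (w - z))) \<le> g w"
proof (cases "g w = \<infinity>")
  case True thus ?thesis by simp
next
  case False
  then obtain Gw where gw: "g w = ereal Gw" using gpr by (cases "g w") auto
  have "Gz - p \<bullet> (w - z) - t * K \<le> Gw" if t0: "0 < t" and t1: "t \<le> 1" for t
  proof -
    have eqv: "(1 - t) *\<^sub>R z + t *\<^sub>R w = z + t *\<^sub>R (w - z)" by (simp add: algebra_simps)
    have le: "g (z + t *\<^sub>R (w - z)) \<le> ereal ((1 - t) * Gz + t * Gw)"
      using conv_real[OF conv gz gw, of t] t0 t1 eqv by simp
    hence "g (z + t *\<^sub>R (w - z)) \<noteq> \<infinity>" by auto
    then obtain Gv where gv: "g (z + t *\<^sub>R (w - z)) = ereal Gv" using gpr by (cases "g (z + t *\<^sub>R (w - z))") auto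
    have A: "Gv \<le> (1 - t) * Gz + t * Gw" using le gv by simp
    have B: "Gz \<le> Gv + t * (p \<bullet> (w - z)) + t^2 * K" using minp[OF t0 t1 gv] .
    define P where "P = p \<bullet> (w - z)"
    have C: "Gz \<le> (1 - t) * Gz + t * Gw + t * P + t^2 * K" using A B unfolding P_def by linarith
    have E: "t * (Gz - P - t * K) - t * Gw = Gz - ((1 - t) * Gz + t * Gw + t * P + t^2 * K)"
      by (simp add: algebra_simps power2_eq_square)
    have "t * (Gz - P - t * K) \<le> t * Gw" using C E by linarith
    hence "Gz - P - t * K \<le> Gw" using t0 by simp
    thus ?thesis unfolding P_def .
  qed
  hence "Gz - p \<bullet> (w - z) \<le> Gw" by (rule small_t_le)
  thus ?thesis using gz gw by simp
qed



lemma quad_lower: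
  fixes p v c :: "'a::real_inner"
  assumes gam: "0 < \<gamma>"
  shows "- (\<gamma> / 2 * (norm p)^2) \<le> p \<bullet> (v - c) + 1 / (2 * \<gamma>) * (norm (c - v))^2"
proof -
  have e: "(norm ((v - c) + \<gamma> *\<^sub>R p))^2 = (norm (v - c))^2 + 2 * \<gamma> * (p \<bullet> (v - c)) + \<gamma>^2 * (norm p)^2"
    unfolding power2_norm_eq_inner by (simp add: inner_add_left inner_add_right inner_commute algebra_simps power2_eq_square)
  have "0 \<le> (norm ((v - c) + \<gamma> *\<^sub>R p))^2 / (2 * \<gamma>)" using gam by simp
  also have "\<dots> = p \<bullet> (v - c) + 1 / (2 * \<gamma>) * (norm (c - v))^2 + \<gamma> / 2 * (norm p)^2"
    unfolding e using gam by (simp add: norm_minus_commute field_simps power2_eq_square)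
  finally show ?thesis by linarith
qed

lemma midpoint_norm:
  fixes c a b :: "'a::real_inner"
  shows "(norm (c - (1/2) *\<^sub>R (a + b)))^2 = ((norm (c - a))^2 + (norm (c - b))^2) / 2 - (norm (a - b))^2 / 4"
  unfolding power2_norm_eq_inner
  by (simp add: inner_add_left inner_add_right inner_diff_left inner_diff_right inner_commute algebra_simps) (simp add: field_simps)

lemma prox_exists:
  fixes g :: "'a::{real_inner,complete_space} \<Rightarrow> ereal"
  assumes conv: "ext_convex g" and gpr: "\<forall>x. g x \<noteq> -\<infinity>" and w0: "g w0 \<noteq> \<infinity>"
    and lsc: "ext_lsc g"
    and minor: "\<And>v. ereal (G0 + p \<bullet> (v - x0)) \<le> g v" and gam: "0 < \<gamma>"
  shows "\<exists>z. \<forall>w. g z + ereal (1 / (2 * \<gamma>) * (norm (c - z))^2) \<le> g w + ereal (1 / (2 * \<gamma>) * (norm (c - w))^2)"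
proof -
  define q where "q = (\<lambda>v. 1 / (2 * \<gamma>) * (norm (c - v))^2)"
  define phi where "phi = (\<lambda>v. g v + ereal (q v))"
  define m0 where "m0 = G0 + p \<bullet> (c - x0) - \<gamma> / 2 * (norm p)^2"
  have lb: "ereal m0 \<le> phi v" for v
  proof -
    have "m0 \<le> G0 + p \<bullet> (v - x0) + q v"
      using quad_lower[OF gam, of p v c] unfolding m0_def q_def
      by (simp add: inner_diff_right)
    hence "ereal m0 \<le> ereal (G0 + p \<bullet> (v - x0)) + ereal (q v)" by simp
    also have "\<dots> \<le> g v + ereal (q v)" by (rule add_right_mono[OF minor])
    finally show ?thesis unfolding phi_def .
  qed
  define m where "m = Inf (range phi)"
  have m_ge: "ereal m0 \<le> m" unfolding m_def by (rule Inf_greatest) (auto simp: lb)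
  have m_le: "m \<le> phi w" for w unfolding m_def by (rule Inf_lower) simp
  obtain G1 where g1: "g w0 = ereal G1" using w0 gpr by (cases "g w0") auto
  have "m \<le> ereal (G1 + q w0)" using m_le[of w0] g1 unfolding phi_def by simp
  then obtain mr where mr: "m = ereal mr" using m_ge by (cases m) auto
  have "\<exists>v. phi v < ereal (mr + inverse (real (Suc n)))" for n
  proof -
    have "m < ereal (mr + inverse (real (Suc n)))" using mr by simp
    thus ?thesis unfolding m_def by (auto simp: Inf_less_iff)
  qed
  then obtain V where V: "\<And>n. phi (V n) < ereal (mr + inverse (real (Suc n)))" by metis
  have gV: "g (V n) = ereal (real_of_ereal (g (V n)))" for n
  proof -
    have "g (V n) \<noteq> \<infinity>" using V[of n] unfolding phi_def by auto
    thus ?thesis using gpr by (cases "g (V n)") auto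
  qed
  define GV where "GV = (\<lambda>n. real_of_ereal (g (V n)))"
  define Phi where "Phi = (\<lambda>n. GV n + q (V n))"
  have phiV: "phi (V n) = ereal (Phi n)" for n
    unfolding phi_def Phi_def GV_def by (subst gV[of n]) simp
  have Phi_ub: "Phi n < mr + inverse (real (Suc n))" for n
    using V[of n] unfolding phiV by simp
  have Phi_lb: "mr \<le> Phi n" for n
    using m_le[of "V n"] mr unfolding phiV by simp
  have mid: "(norm (V n - V k))^2 / (8 * \<gamma>) \<le> (Phi n + Phi k) / 2 - mr" for n k
  proof -
    define M where "M = (1/2) *\<^sub>R (V n + V k)"
    have "M = (1 - 1/2) *\<^sub>R V n + (1/2) *\<^sub>R V k" unfolding M_def by (simp add: algebra_simps)
    hence gM: "g M \<le> ereal ((1 - 1/2) * GV n + (1/2) * GV k)"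
      using conv_real[OF conv gV[of n] gV[of k], of "1/2"] unfolding GV_def by simp
    have "ereal mr \<le> g M + ereal (q M)" using m_le[of M] mr unfolding phi_def by simp
    also have "\<dots> \<le> ereal ((1 - 1/2) * GV n + (1/2) * GV k) + ereal (q M)" by (rule add_right_mono[OF gM])
    finally have "mr \<le> GV n / 2 + GV k / 2 + q M" by simp
    moreover have "q M = (q (V n) + q (V k)) / 2 - (norm (V n - V k))^2 / (8 * \<gamma>)"
      unfolding q_def M_def midpoint_norm using gam by (simp add: field_simps)
    ultimately show ?thesis unfolding Phi_def by (simp add: field_simps)
  qed
  have cau: "Cauchy V"
  proof (rule CauchyI)
    fix e :: real assume e0: "0 < e"
    obtain N :: nat where N: "8 * \<gamma> / e^2 < real N" using reals_Archimedean2 by blast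
    have N': "8 * \<gamma> < e^2 * real (Suc N)"
    proof -
      have "8 * \<gamma> < real N * e^2" using N e0 by (simp add: field_simps)
      moreover have "0 < e^2" using e0 by simp
      moreover have "e^2 * real (Suc N) = e^2 + real N * e^2" by (simp add: algebra_simps)
      ultimately show ?thesis by linarith
    qed
    show "\<exists>M. \<forall>m\<ge>M. \<forall>n\<ge>M. norm (V m - V n) < e"
    proof (intro exI allI impI)
      fix n k assume n: "N \<le> n" and k: "N \<le> k"
      have i1: "inverse (real (Suc n)) \<le> inverse (real (Suc N))" using n by (simp add: le_imp_inverse_le)
      have i2: "inverse (real (Suc k)) \<le> inverse (real (Suc N))" using k by (simp add: le_imp_inverse_le)
      have "(norm (V n - V k))^2 / (8 * \<gamma>) < (inverse (real (Suc N)) + inverse (real (Suc N))) / 2"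
      proof -
        define X where "X = (norm (V n - V k))^2 / (8 * \<gamma>)"
        define a1 where "a1 = inverse (real (Suc n))"
        define a2 where "a2 = inverse (real (Suc k))"
        define a3 where "a3 = inverse (real (Suc N))"
        have "X \<le> (Phi n + Phi k) / 2 - mr" "Phi n < mr + a1" "Phi k < mr + a2" "a1 \<le> a3" "a2 \<le> a3"
          using mid[of n k] Phi_ub[of n] Phi_ub[of k] i1 i2 unfolding X_def a1_def a2_def a3_def by auto
        hence "X < (a3 + a3) / 2" unfolding add_divide_distrib by linarith
        thus ?thesis unfolding X_def a3_def .
      qed
      hence h1: "(norm (V n - V k))^2 / (8 * \<gamma>) < inverse (real (Suc N))" by simp
      have h2: "(norm (V n - V k))^2 < inverse (real (Suc N)) * (8 * \<gamma>)"
        using h1 gam by (simp only: pos_divide_less_eq)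
      have h3': "(8 * \<gamma>) / real (Suc N) < e^2"
        using N' by (subst pos_divide_less_eq) simp_all
      have h3e: "inverse (real (Suc N)) * (8 * \<gamma>) = (8 * \<gamma>) / real (Suc N)"
        by (simp add: divide_inverse mult.commute)
      have h3: "inverse (real (Suc N)) * (8 * \<gamma>) < e^2" using h3' h3e by simp
      have "(norm (V n - V k))^2 < e^2" using h2 h3 by linarith
      thus "norm (V n - V k) < e" by (rule power_less_imp_less_base) (use e0 in simp)
    qed
  qed
  then obtain vb where Vlim: "V \<longlonglongrightarrow> vb" using Cauchy_convergent convergent_def by blast
  have Philim: "Phi \<longlonglongrightarrow> mr"
  proof (rule tendsto_sandwich[of "\<lambda>n. mr" _ _ "\<lambda>n. mr + inverse (real (Suc n))"])
    show "\<forall>\<^sub>F n in sequentially. mr \<le> Phi n" using Phi_lb by simp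
    show "\<forall>\<^sub>F n in sequentially. Phi n \<le> mr + inverse (real (Suc n))" using Phi_ub by (simp add: less_imp_le)
    show "(\<lambda>n. mr) \<longlonglongrightarrow> mr" by simp
    show "(\<lambda>n. mr + inverse (real (Suc n))) \<longlonglongrightarrow> mr"
      using tendsto_add[OF tendsto_const LIMSEQ_inverse_real_of_nat, of mr] by simp
  qed
  have qlim: "(\<lambda>n. q (V n)) \<longlonglongrightarrow> q vb" unfolding q_def by (intro tendsto_intros Vlim)
  have GVlim: "GV \<longlonglongrightarrow> mr - q vb"
  proof -
    have "(\<lambda>n. Phi n - q (V n)) \<longlonglongrightarrow> mr - q vb" by (intro tendsto_intros Philim qlim)
    moreover have "(\<lambda>n. Phi n - q (V n)) = GV" unfolding Phi_def by auto
    ultimately show ?thesis by simp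
  qed
  have "(\<lambda>n. g (V n)) \<longlonglongrightarrow> ereal (mr - q vb)"
  proof -
    have "(\<lambda>n. ereal (GV n)) \<longlonglongrightarrow> ereal (mr - q vb)" using GVlim by (rule tendsto_ereal)
    moreover have "(\<lambda>n. ereal (GV n)) = (\<lambda>n. g (V n))" using gV unfolding GV_def by auto
    ultimately show ?thesis by simp
  qed
  hence "liminf (\<lambda>n. g (V n)) = ereal (mr - q vb)" by (intro lim_imp_Liminf) auto
  hence gvb: "g vb \<le> ereal (mr - q vb)" using lsc Vlim unfolding ext_lsc_def by metis
  have "phi vb \<le> ereal (mr - q vb) + ereal (q vb)" unfolding phi_def by (rule add_right_mono[OF gvb])
  hence "phi vb \<le> m" using mr by simp
  hence "\<forall>w. phi vb \<le> phi w" using m_le order_trans by blast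
  thus ?thesis unfolding phi_def q_def by blast
qed


lemma prox_props:
  fixes g :: "'a::{real_inner,complete_space} \<Rightarrow> ereal"
  assumes conv: "ext_convex g" and gpr: "\<forall>x. g x \<noteq> -\<infinity>" and w0: "g w0 \<noteq> \<infinity>"
    and lsc: "ext_lsc g"
    and minor: "\<And>v. ereal (G0 + p \<bullet> (v - x0)) \<le> g v" and gam: "0 < \<gamma>"
  shows "g (prox \<gamma> g c) \<noteq> \<infinity>"
    and "\<And>w. g (prox \<gamma> g c) + ereal (((1 / \<gamma>) *\<^sub>R (c - prox \<gamma> g c)) \<bullet> (w - prox \<gamma> g c)) \<le> g w"
proof -
  define z where "z = prox \<gamma> g c"
  define q where "q = (\<lambda>v. 1 / (2 * \<gamma>) * (norm (c - v))^2)"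
  have zmin: "\<forall>w. g z + ereal (q z) \<le> g w + ereal (q w)"
    unfolding z_def prox_def q_def
    by (rule someI_ex) (rule prox_exists[OF conv gpr w0 lsc minor gam])
  obtain G1 where g1: "g w0 = ereal G1" using w0 gpr by (cases "g w0") auto
  have "g z + ereal (q z) \<le> ereal (G1 + q w0)" using zmin g1 by (metis plus_ereal.simps(1))
  hence zfin: "g z \<noteq> \<infinity>" by auto
  thus "g (prox \<gamma> g c) \<noteq> \<infinity>" unfolding z_def .
  obtain Gz where gz: "g z = ereal Gz" using zfin gpr by (cases "g z") auto
  define pp where "pp = - ((1 / \<gamma>) *\<^sub>R (c - z))"
  have sub: "g z + ereal (- (pp \<bullet> (w - z))) \<le> g w" for w
  proof (rule subgrad_core[OF conv gpr gz, where K = "1 / (2 * \<gamma>) * (norm (w - z))^2"])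
    fix t Gv assume t0: "0 < t" and t1: "t \<le> 1" and gv: "g (z + t *\<^sub>R (w - z)) = ereal Gv"
    have "g z + ereal (q z) \<le> g (z + t *\<^sub>R (w - z)) + ereal (q (z + t *\<^sub>R (w - z)))" using zmin by blast
    hence A: "Gz + q z \<le> Gv + q (z + t *\<^sub>R (w - z))" using gz gv by simp
    have e: "(norm (c - (z + t *\<^sub>R (w - z))))^2 = (norm (c - z))^2 - 2 * t * ((c - z) \<bullet> (w - z)) + t^2 * (norm (w - z))^2"
      unfolding power2_norm_eq_inner
      by (simp add: inner_diff_left inner_diff_right inner_add_left inner_add_right inner_commute algebra_simps power2_eq_square)
    have B: "q (z + t *\<^sub>R (w - z)) = q z + t * (pp \<bullet> (w - z)) + t^2 * (1 / (2 * \<gamma>) * (norm (w - z))^2)"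
    proof -
      have pe: "pp \<bullet> (w - z) = - ((c - z) \<bullet> (w - z)) / \<gamma>" unfolding pp_def by simp
      show ?thesis unfolding q_def e pe using gam by (simp add: field_simps)
    qed
    show "Gz \<le> Gv + t * (pp \<bullet> (w - z)) + t^2 * (1 / (2 * \<gamma>) * (norm (w - z))^2)"
      using A B by linarith
  qed
  fix w
  have "- (pp \<bullet> (w - z)) = ((1 / \<gamma>) *\<^sub>R (c - z)) \<bullet> (w - z)" unfolding pp_def by simp
  thus "g (prox \<gamma> g c) + ereal (((1 / \<gamma>) *\<^sub>R (c - prox \<gamma> g c)) \<bullet> (w - prox \<gamma> g c)) \<le> g w"
    using sub[of w] unfolding z_def by simp
qed

lemma (in smooth) opt_sub:
  fixes g :: "'a \<Rightarrow> ereal"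
  assumes conv: "ext_convex g" and gpr: "\<forall>x. g x \<noteq> -\<infinity>"
    and xmin: "\<And>w. ereal (f xs) + g xs \<le> ereal (f w) + g w" and gx: "g xs = ereal G0"
  shows "g xs + ereal (- (gradf xs \<bullet> (w - xs))) \<le> g w"
proof (rule subgrad_core[OF conv gpr gx, where K = "L / 2 * (norm (w - xs))^2"])
  fix t Gv assume t0: "0 < t" and t1: "t \<le> 1" and gv: "g (xs + t *\<^sub>R (w - xs)) = ereal Gv"
  have "ereal (f xs) + g xs \<le> ereal (f (xs + t *\<^sub>R (w - xs))) + g (xs + t *\<^sub>R (w - xs))" by (rule xmin)
  hence A: "f xs + G0 \<le> f (xs + t *\<^sub>R (w - xs)) + Gv" using gx gv by simp
  have B: "f (xs + t *\<^sub>R (w - xs)) \<le> f xs + gradf xs \<bullet> (t *\<^sub>R (w - xs)) + L / 2 * (norm (t *\<^sub>R (w - xs)))^2"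
    using descent_upper[of "xs + t *\<^sub>R (w - xs)" xs] by simp
  have C: "gradf xs \<bullet> (t *\<^sub>R (w - xs)) = t * (gradf xs \<bullet> (w - xs))" by simp
  have D: "L / 2 * (norm (t *\<^sub>R (w - xs)))^2 = t^2 * (L / 2 * (norm (w - xs))^2)"
    using t0 by (simp add: power_mult_distrib)
  show "G0 \<le> Gv + t * (gradf xs \<bullet> (w - xs)) + t^2 * (L / 2 * (norm (w - xs))^2)"
    using A B C D by linarith
qed


theorem theorem3:
  fixes f :: "'a::{real_inner, complete_space} \<Rightarrow> real"
    and gradf :: "'a \<Rightarrow> 'a"
    and g :: "'a \<Rightarrow> ereal"
    and \<mu> L :: real
    and x y z zbar :: "nat \<Rightarrow> 'a"
    and x0 xstar :: 'a
  assumes mu_pos: "0 < \<mu>" and mu_L: "\<mu> < L"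
    and f_deriv: "\<And>u. (f has_derivative (\<lambda>h. gradf u \<bullet> h)) (at u)"
    and f_lip: "\<And>u v. norm (gradf u - gradf v) \<le> L * norm (u - v)"
    and f_strong: "convex_on UNIV (\<lambda>u. f u - \<mu> / 2 * (norm u)\<^sup>2)"
    and g_convex: "ext_convex g" and g_proper: "ext_proper g" and g_lsc: "ext_lsc g"
    and x_init: "x 0 = x0" and z_init: "z 0 = x0"
    and y_def: "\<And>k. y k = (2 * sqrt (\<mu> / L) / (1 + sqrt (\<mu> / L))) *\<^sub>R z k
                        + ((1 - sqrt (\<mu> / L)) / (1 + sqrt (\<mu> / L))) *\<^sub>R x k"
    and zbar_def: "\<And>k. zbar (Suc k) = (1 - sqrt (\<mu> / L)) *\<^sub>R z k + sqrt (\<mu> / L) *\<^sub>R y k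
                        - (1 / (sqrt (\<mu> / L) * L)) *\<^sub>R gradf (y k)"
    and z_def: "\<And>k. z (Suc k) = prox (1 / (sqrt (\<mu> / L) * L)) g (zbar (Suc k))"
    and x_def: "\<And>k. x (Suc k) = y k - (1 / L) *\<^sub>R gradf (y k)
                        - sqrt (\<mu> / L) *\<^sub>R (zbar (Suc k) - z (Suc k))"
    and xstar_min: "\<And>w. ereal (f xstar) + g xstar \<le> ereal (f w) + g w"
  shows "(\<lambda>k. norm (z k - xstar)) \<in> O(\<lambda>k. (1 - sqrt (\<mu> / L)) ^ k)"
proof -
  define s where "s = sqrt (\<mu> / L)"
  define P where "P = 1 + s"
  define M where "M = 1 - s"
  have L0: "0 < L" using mu_pos mu_L by linarith
  have q0: "0 < \<mu> / L" using mu_pos L0 by simp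
  have q1: "\<mu> / L < 1" using mu_L L0 by simp
  have s0: "0 < s" unfolding s_def using q0 by simp
  have s1: "s < 1" unfolding s_def using q1 q0 by simp
  have ssq: "s^2 = \<mu> / L" unfolding s_def using q0 by simp
  have mu_eq: "\<mu> = s^2 * L" using ssq L0 by (simp add: field_simps)
  have P0: "0 < P" unfolding P_def using s0 by simp
  have M0: "0 < M" unfolding M_def using s1 by simp
  have M1: "M < 1" unfolding M_def using s0 by simp
  have nz: "P \<noteq> 0" "M \<noteq> 0" "s \<noteq> 0" "L \<noteq> 0" using P0 M0 s0 L0 by auto
  interpret sm: smooth f gradf L by unfold_locales (rule f_deriv, rule f_lip)
  have gpr: "\<forall>x. g x \<noteq> -\<infinity>" and gex: "\<exists>x. g x \<noteq> \<infinity>"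
    using g_proper unfolding ext_proper_def by auto
  obtain w0 where w0: "g w0 \<noteq> \<infinity>" using gex by blast
  have gxfin: "g xstar \<noteq> \<infinity>"
  proof
    assume "g xstar = \<infinity>"
    hence "ereal (f xstar) + g xstar = \<infinity>" by simp
    moreover have "ereal (f w0) + g w0 \<noteq> \<infinity>" using w0 gpr by (cases "g w0") auto
    ultimately show False using xstar_min[of w0] by (simp add: top_unique)
  qed
  obtain G0 where gx: "g xstar = ereal G0" using gxfin gpr by (cases "g xstar") auto
  define ds where "ds = gradf xstar"
  have opt: "g xstar + ereal (- (ds \<bullet> (w - xstar))) \<le> g w" for w
    unfolding ds_def by (rule sm.opt_sub[OF g_convex gpr xstar_min gx])
  have minor: "ereal (G0 + (- ds) \<bullet> (v - xstar)) \<le> g v" for v using opt[of v] gx by simp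
  define gam where "gam = 1 / (s * L)"
  have gam0: "0 < gam" unfolding gam_def using s0 L0 by simp
  define u where "u = (\<lambda>k. (s * L) *\<^sub>R (zbar k - z k))"
  define d where "d = (\<lambda>k. gradf (y k))"
  have zprox: "prox gam g (zbar (Suc k)) = z (Suc k)" for k using z_def[of k] unfolding gam_def s_def by simp
  have zfin: "g (z (Suc k)) \<noteq> \<infinity>" for k
    using prox_props(1)[OF g_convex gpr w0 g_lsc minor gam0, of "zbar (Suc k)"] unfolding zprox .
  have zsub: "g (z (Suc k)) + ereal (u (Suc k) \<bullet> (w - z (Suc k))) \<le> g w" for k w
  proof -
    have e: "(1 / gam) *\<^sub>R (zbar (Suc k) - z (Suc k)) = u (Suc k)" unfolding u_def gam_def by simp
    show ?thesis using prox_props(2)[OF g_convex gpr w0 g_lsc minor gam0, of "zbar (Suc k)" w]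
      unfolding zprox e .
  qed
  define Gz where "Gz = (\<lambda>k. real_of_ereal (g (z (Suc k))))"
  have gz: "g (z (Suc k)) = ereal (Gz k)" for k
    using zfin[of k] gpr unfolding Gz_def by (cases "g (z (Suc k))") auto
  have yrel: "y k = (2 * s / P) *\<^sub>R z k + (M / P) *\<^sub>R x k" for k
    unfolding P_def M_def s_def by (rule y_def)
  have uz: "zbar (Suc k) - z (Suc k) = (1 / (s * L)) *\<^sub>R u (Suc k)" for k
    unfolding u_def using nz by simp
  have zrel: "z (Suc k) = M *\<^sub>R z k + s *\<^sub>R y k - (1 / (s * L)) *\<^sub>R (d k + u (Suc k))" for k
  proof -
    have "z (Suc k) = zbar (Suc k) - (1 / (s * L)) *\<^sub>R u (Suc k)" using uz[of k] by (simp add: algebra_simps)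
    also have "\<dots> = M *\<^sub>R z k + s *\<^sub>R y k - (1 / (s * L)) *\<^sub>R (d k + u (Suc k))"
      using zbar_def[of k] unfolding M_def d_def s_def[symmetric] by (simp add: algebra_simps)
    finally show ?thesis .
  qed
  have xrel: "x (Suc k) = y k - (1 / L) *\<^sub>R (d k + u (Suc k))" for k
  proof -
    have "s *\<^sub>R (zbar (Suc k) - z (Suc k)) = (1 / L) *\<^sub>R u (Suc k)" unfolding uz using nz by simp
    thus ?thesis using x_def[of k] unfolding d_def s_def[symmetric] by (simp add: algebra_simps)
  qed
  define Zs where "Zs = (\<lambda>j. z (Suc j) - xstar)"
  define Us where "Us = (\<lambda>j. u (Suc j) + ds)"
  define Ys where "Ys = (\<lambda>j. y j - xstar)"
  define Ds where "Ds = (\<lambda>j. d j - ds)"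
  define Fv where "Fv = (\<lambda>j. f (y j) - f xstar - ds \<bullet> (y j - xstar))"
  define Vf where "Vf = (\<lambda>j. s^2 * L / (M * P) * (norm (Zs j))^2 + s^2 / (M * P) * inner (Zs j) (Us j)
      + 1 / (2 * L * M * P) * (norm (Us j))^2
      + (Fv j - (s^2 * L / 2 * (norm (Ys j))^2 + 1 / (2 * L * M * P) * (norm (Ds j - (s^2 * L) *\<^sub>R Ys j))^2)))"
  have LmP: "L - \<mu> = L * M * P" unfolding mu_eq M_def P_def by (simp add: algebra_simps power2_eq_square)
  have dv: "t / (2 * (L - \<mu>)) = 1 / (2 * L * M * P) * t" for t unfolding LmP by simp
  have I0: "s^2 * L / 2 * (norm (Ys j))^2 + 1 / (2 * L * M * P) * (norm (Ds j - (s^2 * L) *\<^sub>R Ys j))^2 \<le> Fv j" for j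
  proof -
    have "f xstar + gradf xstar \<bullet> (y j - xstar) + \<mu> / 2 * (norm (y j - xstar))^2
           + (norm (gradf (y j) - gradf xstar - \<mu> *\<^sub>R (y j - xstar)))^2 / (2 * (L - \<mu>)) \<le> f (y j)"
      by (rule sm.interp[OF f_strong mu_L])
    note A = this[unfolded dv, unfolded mu_eq]
    show ?thesis using A unfolding Fv_def Ys_def Ds_def d_def ds_def by simp
  qed
  have I1: "0 \<le> - Fv (Suc j) + (inner (Ds (Suc j)) (Ys (Suc j)) - (s^2 * L / 2 * (norm (Ys (Suc j)))^2
             + 1 / (2 * L * M * P) * (norm (Ds (Suc j) - (s^2 * L) *\<^sub>R Ys (Suc j)))^2))" for j
  proof -
    define yy where "yy = y (Suc j)"
    have A: "f yy + gradf yy \<bullet> (xstar - yy) + \<mu> / 2 * (norm (xstar - yy))^2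
           + (norm (gradf xstar - gradf yy - \<mu> *\<^sub>R (xstar - yy)))^2 / (2 * (L - \<mu>)) \<le> f xstar"
      by (rule sm.interp[OF f_strong mu_L])
    have n1: "norm (xstar - yy) = norm (Ys (Suc j))" unfolding Ys_def yy_def by (simp add: norm_minus_commute)
    have v2: "gradf xstar - gradf yy - \<mu> *\<^sub>R (xstar - yy) = - (Ds (Suc j) - (s^2 * L) *\<^sub>R Ys (Suc j))"
      unfolding Ds_def Ys_def d_def ds_def yy_def mu_eq by (simp add: algebra_simps)
    have n2: "norm (gradf xstar - gradf yy - \<mu> *\<^sub>R (xstar - yy)) = norm (Ds (Suc j) - (s^2 * L) *\<^sub>R Ys (Suc j))"
      unfolding v2 by (rule norm_minus_cancel)
    have i1: "gradf yy \<bullet> (xstar - yy) = - inner (Ds (Suc j)) (Ys (Suc j)) - ds \<bullet> (yy - xstar)"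
      unfolding Ds_def Ys_def d_def yy_def by (simp add: inner_diff_left inner_diff_right algebra_simps)
    have fe: "Fv (Suc j) = f yy - f xstar - ds \<bullet> (yy - xstar)" unfolding Fv_def yy_def by simp
    note A' = A[unfolded n1 n2 i1 dv, unfolded mu_eq]
    show ?thesis using A' unfolding fe by simp
  qed
  have I2: "0 \<le> Fv j - Fv (Suc j) + (- inner (Ds (Suc j)) (Ys j - Ys (Suc j)) - (s^2 * L / 2 * (norm (Ys j - Ys (Suc j)))^2
             + 1 / (2 * L * M * P) * (norm ((Ds j - Ds (Suc j)) - (s^2 * L) *\<^sub>R (Ys j - Ys (Suc j))))^2))" for j
  proof -
    define yy where "yy = y (Suc j)"
    have A: "f yy + gradf yy \<bullet> (y j - yy) + \<mu> / 2 * (norm (y j - yy))^2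
           + (norm (gradf (y j) - gradf yy - \<mu> *\<^sub>R (y j - yy)))^2 / (2 * (L - \<mu>)) \<le> f (y j)"
      by (rule sm.interp[OF f_strong mu_L])
    have v1: "Ys j - Ys (Suc j) = y j - yy" unfolding Ys_def yy_def by simp
    have v2: "Ds j - Ds (Suc j) = gradf (y j) - gradf yy" unfolding Ds_def d_def yy_def by simp
    have i1: "gradf yy \<bullet> (y j - yy) = inner (Ds (Suc j)) (y j - yy) + ds \<bullet> (y j - yy)"
      unfolding Ds_def d_def yy_def by (simp add: inner_diff_left)
    have fe: "Fv j - Fv (Suc j) = f (y j) - f yy - ds \<bullet> (y j - yy)"
      unfolding Fv_def yy_def by (simp add: inner_diff_right)
    note A' = A[unfolded i1 dv, unfolded mu_eq]
    show ?thesis using A' unfolding v1 v2 fe by simp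
  qed
  define la where "la = s * (1 + M) / (M * P)"
  define lb where "lb = s * M / P"
  have lb0: "0 \<le> lb" unfolding lb_def using s0 M0 P0 by simp
  have lab: "lb \<le> la"
  proof -
    have "M * M \<le> M * 1" using M0 M1 by (intro mult_left_mono) auto
    hence "M * M \<le> 1 + M" using M0 by linarith
    hence "s * (M * M) \<le> s * (1 + M)" using s0 by (simp add: mult_left_mono)
    hence "s * (M * M) / (M * P) \<le> s * (1 + M) / (M * P)"
      by (rule divide_right_mono) (use M0 P0 in simp)
    moreover have "s * (M * M) / (M * P) = lb" unfolding lb_def using M0 by (simp add: field_simps)
    ultimately show ?thesis unfolding la_def by simp
  qed
  have Gc: "lb * inner (Us j) (Zs (Suc j) - Zs j) \<le> la * inner (Us (Suc j)) (Zs (Suc j))" for j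
  proof -
    define hzz where "hzz = Gz (Suc j) - G0 + ds \<bullet> (z (Suc (Suc j)) - xstar)"
    define hz where "hz = Gz j - G0 + ds \<bullet> (z (Suc j) - xstar)"
    have "g xstar + ereal (- (ds \<bullet> (z (Suc (Suc j)) - xstar))) \<le> g (z (Suc (Suc j)))" by (rule opt)
    hence h1: "0 \<le> hzz" unfolding hzz_def using gx gz[of "Suc j"] by simp
    have "g xstar + ereal (- (ds \<bullet> (z (Suc j) - xstar))) \<le> g (z (Suc j))" by (rule opt)
    hence h2: "0 \<le> hz" unfolding hz_def using gx gz[of j] by simp
    have "g (z (Suc (Suc j))) + ereal (u (Suc (Suc j)) \<bullet> (xstar - z (Suc (Suc j)))) \<le> g xstar" by (rule zsub)
    hence "Gz (Suc j) + u (Suc (Suc j)) \<bullet> (xstar - z (Suc (Suc j))) \<le> G0" using gx gz[of "Suc j"] by simp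
    hence A: "hzz \<le> inner (Us (Suc j)) (Zs (Suc j))"
      unfolding hzz_def Us_def Zs_def by (simp add: inner_add_left inner_diff_right algebra_simps)
    have "g (z (Suc j)) + ereal (u (Suc j) \<bullet> (z (Suc (Suc j)) - z (Suc j))) \<le> g (z (Suc (Suc j)))" by (rule zsub)
    hence "Gz j + u (Suc j) \<bullet> (z (Suc (Suc j)) - z (Suc j)) \<le> Gz (Suc j)" using gz[of j] gz[of "Suc j"] by simp
    hence B: "inner (Us j) (Zs (Suc j) - Zs j) \<le> hzz - hz"
      unfolding hzz_def hz_def Us_def Zs_def by (simp add: inner_add_left inner_diff_right algebra_simps)
    have la0: "0 \<le> la" using lab lb0 by linarith
    have C1: "la * hzz \<le> la * inner (Us (Suc j)) (Zs (Suc j))" using A la0 by (rule mult_left_mono)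
    have C2: "lb * inner (Us j) (Zs (Suc j) - Zs j) \<le> lb * (hzz - hz)" using B lb0 by (rule mult_left_mono)
    have C3: "0 \<le> (la - lb) * hzz" using lab h1 by simp
    have C4: "0 \<le> lb * hz" using lb0 h2 by simp
    have E: "lb * (hzz - hz) = la * hzz - (la - lb) * hzz - lb * hz" by (simp add: algebra_simps)
    show ?thesis using C1 C2 C3 C4 E by linarith
  qed
  have step: "Vf (Suc j) \<le> M^2 * Vf j" for j
  proof -
    define Xv where "Xv = x (Suc j) - xstar"
    have hX: "Xv = Ys j - (1/L) *\<^sub>R (Ds j + Us j)"
      unfolding Xv_def Ys_def Ds_def Us_def xrel by (simp add: algebra_simps)
    have cs: "2 * s / P + M / P = 1"
    proof -
      have "2 * s + M = P" unfolding P_def M_def by simp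
      thus ?thesis using nz by (simp add: add_divide_distrib[symmetric])
    qed
    have hY: "Ys (Suc j) = (2 * s / P) *\<^sub>R Zs j + (M / P) *\<^sub>R Xv"
    proof -
      have "(2 * s / P) *\<^sub>R Zs j + (M / P) *\<^sub>R Xv = ((2 * s / P) *\<^sub>R z (Suc j) + (M / P) *\<^sub>R x (Suc j)) - (2 * s / P + M / P) *\<^sub>R xstar"
        unfolding Zs_def Xv_def by (simp add: algebra_simps)
      also have "\<dots> = Ys (Suc j)" unfolding cs Ys_def yrel[of "Suc j"] by simp
      finally show ?thesis by simp
    qed
    have hZ: "Zs (Suc j) = M *\<^sub>R Zs j + s *\<^sub>R Ys (Suc j) - (1 / (s * L)) *\<^sub>R (Ds (Suc j) + Us (Suc j))"
    proof -
      have cs2: "M + s = 1" unfolding M_def by simp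
      have "M *\<^sub>R Zs j + s *\<^sub>R Ys (Suc j) - (1 / (s * L)) *\<^sub>R (Ds (Suc j) + Us (Suc j))
          = (M *\<^sub>R z (Suc j) + s *\<^sub>R y (Suc j) - (1 / (s * L)) *\<^sub>R (d (Suc j) + u (Suc (Suc j)))) - (M + s) *\<^sub>R xstar"
        unfolding Zs_def Ys_def Ds_def Us_def by (simp add: algebra_simps)
      also have "\<dots> = Zs (Suc j)" unfolding cs2 Zs_def zrel[of "Suc j"] by simp
      finally show ?thesis by simp
    qed
    note K = key_vec[of P s M L Xv "Ys j" "Ds j" "Us j" "Ys (Suc j)" "Zs j" "Zs (Suc j)" "Ds (Suc j)" "Us (Suc j)",
                     OF P_def M_def nz hX hY hZ]
    have R0: "-(M / (2 * P * L)) * (norm (Us j - Us (Suc j)))^2 - (1 / (2 * L * M * P) - M / (2 * P * L)) * (norm (Us (Suc j)))^2 \<le> 0"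
    proof -
      have e: "1 / (2 * L * M * P) - M / (2 * P * L) = (1 - M^2) / (2 * L * M * P)"
        using nz by (simp add: field_simps power2_eq_square)
      have "0 \<le> (1 - M^2) / (2 * L * M * P)" using M0 M1 P0 L0 by (simp add: power_le_one)
      moreover have "0 \<le> M / (2 * P * L)" using M0 P0 L0 by simp
      ultimately have a: "0 \<le> (1 - M^2) / (2 * L * M * P) * (norm (Us (Suc j)))^2"
        and b: "0 \<le> M / (2 * P * L) * (norm (Us j - Us (Suc j)))^2"
        by (intro mult_nonneg_nonneg; simp)+
      have "-(M / (2 * P * L)) * (norm (Us j - Us (Suc j)))^2 - (1 / (2 * L * M * P) - M / (2 * P * L)) * (norm (Us (Suc j)))^2
        = -(M / (2 * P * L) * (norm (Us j - Us (Suc j)))^2) - (1 - M^2) / (2 * L * M * P) * (norm (Us (Suc j)))^2"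
        unfolding e by simp
      thus ?thesis using a b by linarith
    qed
    have m: "0 \<le> 1 - M^2" using M0 M1 by (simp add: power_le_one)
    have Gc': "s * M / P * inner (Us j) (Zs (Suc j) - Zs j) \<le> s * (1 + M) / (M * P) * inner (Us (Suc j)) (Zs (Suc j))"
      using Gc[of j] unfolding la_def lb_def .
    note C = combine[OF K I1[of j] I2[of j] Gc' R0 m]
    show ?thesis unfolding Vf_def using C by (simp add: algebra_simps)
  qed
  define cc where "cc = 1 / (2 * L * M * P)"
  define kap where "kap = s^2 * L / (M * P) - cc * (s^2 * L)^2"
  have kap_eq: "kap = s^2 * L * (2 - s^2) / (2 * M * P)"
    unfolding kap_def cc_def using nz by (simp add: field_simps power2_eq_square)
  have kap0: "0 < kap"
  proof -
    have "s^2 < 1" using s0 s1 by (simp add: power_less_one_iff)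
    hence "0 < 2 - s^2" by simp
    thus ?thesis unfolding kap_eq using s0 L0 M0 P0 by simp
  qed
  have lower: "kap * (norm (Zs j))^2 \<le> Vf j" for j
  proof -
    define Z where "Z = Zs j"
    define U where "U = Us j"
    have n: "(norm (U + (s^2 * L) *\<^sub>R Z))^2 = (norm U)^2 + 2 * (s^2 * L) * inner Z U + (s^2 * L)^2 * (norm Z)^2"
      unfolding power2_norm_eq_inner
      by (simp add: inner_add_left inner_add_right inner_commute algebra_simps power2_eq_square)
    have c1: "cc * (2 * (s^2 * L)) = s^2 / (M * P)" unfolding cc_def using nz by (simp add: field_simps)
    have e: "s^2 * L / (M * P) * (norm Z)^2 + s^2 / (M * P) * inner Z U + cc * (norm U)^2
        = kap * (norm Z)^2 + cc * (norm (U + (s^2 * L) *\<^sub>R Z))^2"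
      unfolding n kap_def c1[symmetric] by (simp add: algebra_simps)
    have p: "0 \<le> cc * (norm (U + (s^2 * L) *\<^sub>R Z))^2" unfolding cc_def using L0 M0 P0 by simp
    have "Vf j = s^2 * L / (M * P) * (norm Z)^2 + s^2 / (M * P) * inner Z U + cc * (norm U)^2
       + (Fv j - (s^2 * L / 2 * (norm (Ys j))^2 + cc * (norm (Ds j - (s^2 * L) *\<^sub>R Ys j))^2))"
      unfolding Vf_def Z_def U_def cc_def by simp
    thus ?thesis using e p I0[of j] unfolding Z_def cc_def by linarith
  qed
  have V0: "0 \<le> Vf 0" using lower[of 0] kap0 by (meson mult_nonneg_nonneg order_trans less_imp_le zero_le_power2)
  have Vdec: "Vf j \<le> (M^2)^j * Vf 0" for j
  proof (induction j)
    case 0 thus ?case by simp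
  next
    case (Suc j)
    have "Vf (Suc j) \<le> M^2 * Vf j" by (rule step)
    also have "\<dots> \<le> M^2 * ((M^2)^j * Vf 0)" using Suc by (simp add: mult_left_mono)
    finally show ?case by simp
  qed
  define C where "C = sqrt (Vf 0 / kap)"
  have bnd: "norm (z (Suc j) - xstar) \<le> C * M^j" for j
  proof -
    have "kap * (norm (Zs j))^2 \<le> (M^2)^j * Vf 0" using lower[of j] Vdec[of j] by linarith
    hence "(norm (Zs j))^2 \<le> (M^j)^2 * (Vf 0 / kap)" using kap0
      by (simp add: field_simps power_mult[symmetric] mult.commute)
    hence "sqrt ((norm (Zs j))^2) \<le> sqrt ((M^j)^2 * (Vf 0 / kap))" by (rule real_sqrt_le_mono)
    moreover have "sqrt ((M^j)^2 * (Vf 0 / kap)) = M^j * C"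
      unfolding C_def by (subst real_sqrt_mult) (use M0 in simp)
    moreover have "sqrt ((norm (Zs j))^2) = norm (Zs j)" by simp
    ultimately have "norm (Zs j) \<le> M^j * C" by simp
    thus ?thesis unfolding Zs_def by (simp add: mult.commute)
  qed
  have ev: "eventually (\<lambda>k. norm (norm (z k - xstar)) \<le> (C / M) * norm ((1 - sqrt (\<mu> / L)) ^ k)) at_top"
    unfolding eventually_at_top_linorder
  proof (intro exI allI impI)
    fix k :: nat assume "1 \<le> k"
    then obtain j where kj: "k = Suc j" by (cases k) auto
    have "norm (norm (z k - xstar)) \<le> C * M^j" using bnd[of j] kj by simp
    also have "\<dots> = (C / M) * norm ((1 - sqrt (\<mu> / L)) ^ k)"
      unfolding kj M_def[symmetric] s_def[symmetric] using M0 by (simp add: field_simps)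
    finally show "norm (norm (z k - xstar)) \<le> (C / M) * norm ((1 - sqrt (\<mu> / L)) ^ k)" .
  qed
  show ?thesis by (rule bigoI[OF ev])
qed


end
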